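(* For no positive integer $m>1$ and no ordering of its elements is a quadratical quasigroup of order $m$ $(m-1)$-translatable.
   Context: A quadratical quasigroup is a quasigroup $(Q,\cdot)$ satisfying $xy\cdot x=zx\cdot yz$ for all $x,y,z$; equivalently, a groupoid satisfying $x\cdot x=x$, $yx\cdot xy=x$ and $xy\cdot zw=xz\cdot yw$. A finite groupoid with ordering $q_1,\dots,q_n$ of its elements is $k$-translatable ($1\le k<n$) with respect to this ordering if $q_i\cdot q_j=q_{i-1}\cdot q_{j-k}$ for all $i\in\{2,\dots,n\}$, $j\in\{1,\dots,n\}$, indices taken modulo $n$ in $\{1,\dots,n\}$. *)

theory Defs
  imports Main
begin

definition quasigroup :: "'a set \<Rightarrow> ('a \<Rightarrow> 'a \<Rightarrow> 'a) \<Rightarrow> bool" where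
  "quasigroup Q f \<longleftrightarrow>
     (\<forall>x\<in>Q. \<forall>y\<in>Q. f x y \<in> Q) \<and>
     (\<forall>a\<in>Q. \<forall>b\<in>Q. (\<exists>!x. x \<in> Q \<and> f a x = b) \<and> (\<exists>!y. y \<in> Q \<and> f y a = b))"

definition quadratical :: "'a set \<Rightarrow> ('a \<Rightarrow> 'a \<Rightarrow> 'a) \<Rightarrow> bool" where
  "quadratical Q f \<longleftrightarrow> quasigroup Q f \<and>
     (\<forall>x\<in>Q. \<forall>y\<in>Q. \<forall>z\<in>Q. f (f x y) x = f (f z x) (f y z))"

definition modidx :: "nat \<Rightarrow> int \<Rightarrow> nat" where
  "modidx n t = nat ((t - 1) mod int n) + 1"

definition translatable :: "'a set \<Rightarrow> ('a \<Rightarrow> 'a \<Rightarrow> 'a) \<Rightarrow> (nat \<Rightarrow> 'a) \<Rightarrow> nat \<Rightarrow> nat \<Rightarrow> bool" where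
  "translatable Q f q n k \<longleftrightarrow> 1 \<le> k \<and> k < n \<and>
     (\<forall>i\<in>{2..n}. \<forall>j\<in>{1..n}. f (q i) (q j) = f (q (i - 1)) (q (modidx n (int j - int k))))"

end

theory Submission
  imports Defs
begin

lemma modidx_id: "j \<in> {1..m} \<Longrightarrow> modidx m (int j) = j"
  unfolding modidx_def by auto

lemma modidx_range: "m > 0 \<Longrightarrow> modidx m t \<in> {1..m}"
  unfolding modidx_def
proof -
  assume "m > 0"
  then have "(t - 1) mod int m < int m" "0 \<le> (t - 1) mod int m" by auto
  then show "nat ((t - 1) mod int m) + 1 \<in> {1..m}" by auto
qed

lemma modidx_step: "m > 1 \<Longrightarrow> modidx m (int (modidx m t) - int (m - 1)) = modidx m (t + 1)"
proof -
  assume m: "m > 1"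
  have "0 \<le> (t - 1) mod int m" using m by auto
  then have e: "int (modidx m t) = (t - 1) mod int m + 1" unfolding modidx_def by auto
  have "(int (modidx m t) - int (m - 1) - 1) mod int m = ((t - 1) mod int m + 1 - int m) mod int m"
    using e m by (simp add: of_nat_diff algebra_simps)
  also have "\<dots> = ((t - 1) mod int m + 1) mod int m"
    by (metis diff_add_cancel mod_add_self2)
  also have "\<dots> = (t - 1 + 1) mod int m" by (simp add: mod_add_left_eq)
  finally show ?thesis unfolding modidx_def by simp
qed

lemma shift_lemma:
  assumes m: "m > 1"
    and H: "\<forall>i\<in>{2..m}. \<forall>j\<in>{1..m}. f (q i) (q j) = f (q (i - 1)) (q (modidx m (int j - int (m - 1))))"
    and i: "i \<in> {1..m}" and j: "j \<in> {1..m}"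
  shows "d < i \<Longrightarrow> f (q i) (q j) = f (q (i - d)) (q (modidx m (int j + int d)))"
proof (induction d)
  case 0
  then show ?case using modidx_id[OF j] by simp
next
  case (Suc d)
  then have IH: "f (q i) (q j) = f (q (i - d)) (q (modidx m (int j + int d)))" by simp
  have r: "modidx m (int j + int d) \<in> {1..m}" using modidx_range m by simp
  have i2: "i - d \<in> {2..m}" using Suc.prems i by auto
  have "f (q (i - d)) (q (modidx m (int j + int d))) =
        f (q (i - d - 1)) (q (modidx m (int (modidx m (int j + int d)) - int (m - 1))))"
    using H i2 r by blast
  also have "\<dots> = f (q (i - Suc d)) (q (modidx m (int j + int (Suc d))))"
    using modidx_step[OF m] by (simp add: algebra_simps)
  finally show ?case using IH by simp
qed

theorem theorem8p5:
  fixes Q :: "'a set" and f :: "'a \<Rightarrow> 'a \<Rightarrow> 'a" and q :: "nat \<Rightarrow> 'a" and m :: nat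
  assumes "m > 1" and "finite Q" and "card Q = m"
    and "quadratical Q f"
    and "bij_betw q {1..m} Q"
  shows "\<not> translatable Q f q m (m - 1)"
proof
  assume T: "translatable Q f q m (m - 1)"
  have m: "m > 1" by fact
  have H: "\<forall>i\<in>{2..m}. \<forall>j\<in>{1..m}. f (q i) (q j) = f (q (i - 1)) (q (modidx m (int j - int (m - 1))))"
    using T unfolding translatable_def by blast
  have Qeq: "Q = q ` {1..m}" using assms(5) by (simp add: bij_betw_def)
  have commq: "f (q i) (q j) = f (q j) (q i)" if i: "i \<in> {1..m}" and j: "j \<in> {1..m}" for i j
  proof -
    have gen: "f (q a) (q b) = f (q b) (q a)" if a: "a \<in> {1..m}" and b: "b \<in> {1..m}" and ab: "b \<le> a" for a b
    proof -
      have "f (q a) (q b) = f (q (a - (a - b))) (q (modidx m (int b + int (a - b))))"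
        using shift_lemma[of m f q a b "a - b"] m H a b by auto
      also have "\<dots> = f (q b) (q (modidx m (int a)))" using ab by (simp add: of_nat_diff)
      also have "\<dots> = f (q b) (q a)" using modidx_id[OF a] by simp
      finally show ?thesis .
    qed
    show ?thesis
    proof (cases "j \<le> i")
      case True
      show ?thesis by (rule gen[OF i j True])
    next
      case False
      then have "i \<le> j" by simp
      show ?thesis by (rule sym, rule gen[OF j i \<open>i \<le> j\<close>])
    qed
  qed
  have comm: "f x y = f y x" if xQ: "x \<in> Q" and yQ: "y \<in> Q" for x y
  proof -
    obtain i where i: "i \<in> {1..m}" "x = q i" using xQ Qeq by blast
    obtain j where j: "j \<in> {1..m}" "y = q j" using yQ Qeq by blast
    show ?thesis using commq[OF i(1) j(1)] i(2) j(2) by simp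
  qed
  have qg: "quasigroup Q f" and qd: "\<forall>x\<in>Q. \<forall>y\<in>Q. \<forall>z\<in>Q. f (f x y) x = f (f z x) (f y z)"
    using assms(4) unfolding quadratical_def by auto
  have cl: "\<And>x y. x \<in> Q \<Longrightarrow> y \<in> Q \<Longrightarrow> f x y \<in> Q" using qg unfolding quasigroup_def by blast
  have lc: "\<And>a x y. a \<in> Q \<Longrightarrow> x \<in> Q \<Longrightarrow> y \<in> Q \<Longrightarrow> f a x = f a y \<Longrightarrow> x = y"
  proof -
    fix a x y assume a: "a \<in> Q" and x: "x \<in> Q" and y: "y \<in> Q" and e: "f a x = f a y"
    have U: "\<forall>a\<in>Q. \<forall>b\<in>Q. (\<exists>!x. x \<in> Q \<and> f a x = b) \<and> (\<exists>!y. y \<in> Q \<and> f y a = b)"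
      using qg unfolding quasigroup_def by (rule conjunct2)
    have "\<exists>!t. t \<in> Q \<and> f a t = f a y" using U a cl[OF a y] by blast
    then show "x = y" using x y e by (metis)
  qed
  have rc: "\<And>a x y. a \<in> Q \<Longrightarrow> x \<in> Q \<Longrightarrow> y \<in> Q \<Longrightarrow> f x a = f y a \<Longrightarrow> x = y"
  proof -
    fix a x y assume a: "a \<in> Q" and x: "x \<in> Q" and y: "y \<in> Q" and e: "f x a = f y a"
    have U: "\<forall>a\<in>Q. \<forall>b\<in>Q. (\<exists>!x. x \<in> Q \<and> f a x = b) \<and> (\<exists>!y. y \<in> Q \<and> f y a = b)"
      using qg unfolding quasigroup_def by (rule conjunct2)
    have "\<exists>!t. t \<in> Q \<and> f t a = f y a" using U a cl[OF y a] by blast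
    then show "x = y" using x y e by (metis)
  qed
  have idem: "f x x = x" if x: "x \<in> Q" for x
  proof -
    obtain y where y: "y \<in> Q" using x by blast
    have "f (f x y) x = f (f x x) (f y x)" using qd x y by blast
    also have "\<dots> = f (f x y) (f x x)" using comm[OF cl[OF x x] cl[OF y x]] comm[OF x y] by (simp only:)
    finally have "f (f x y) x = f (f x y) (f x x)" .
    then have "x = f x x" by (rule lc[OF cl[OF x y] x cl[OF x x]])
    then show ?thesis by (rule sym)
  qed
  have absorb: "f z x = x" if x: "x \<in> Q" and z: "z \<in> Q" for x z
  proof -
    have "f (f x x) x = f (f z x) (f x z)" using qd x z by blast
    then have "x = f (f z x) (f z x)" using idem[OF x] comm[OF x z] by (simp only:)
    then have "x = f z x" using idem[OF cl[OF z x]] by (rule trans)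
    then show ?thesis by (rule sym)
  qed
  have q1: "q 1 \<in> Q" and q2: "q 2 \<in> Q" using Qeq m by auto
  have "f (q 2) (q 1) = f (q 1) (q 1)" using absorb[OF q1 q2] absorb[OF q1 q1] by simp
  then have "q 2 = q 1" using rc[OF q1 q2 q1] by simp
  moreover have "inj_on q {1..m}" using assms(5) by (simp add: bij_betw_def)
  ultimately show False using m unfolding inj_on_def by fastforce
qed

end
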